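(* Let $A\in M_2(\mathbb R)$ have no eigenvalue in $(-\infty,0]$, with principal disk $\operatorname{PD}(A)=\overline D(a+ib,r)$. Then \[\|\log A\|_2=f_{CA}(a,b,r)+f_{RD}(a,b,r),\qquad \lfloor\log A\rfloor_2=f_{CA}(a,b,r)-f_{RD}(a,b,r),\] where, with $\Delta=a^2+b^2-r^2$, \[f_{CA}=\sqrt{\big(\log\sqrt{\Delta}\big)^2+\Big(\frac{b\operatorname{AC}(a/\sqrt\Delta)}{\sqrt\Delta}\Big)^2},\qquad f_{RD}=\frac{r\operatorname{AC}(a/\sqrt\Delta)}{\sqrt\Delta}.\] In particular if $\det A=1$ then $f_{CA}=\operatorname{AC}(a)b$ and $f_{RD}=\operatorname{AC}(a)r$.
   Context: Write $A=\tilde a\mathrm{Id}_2+\tilde b\tilde I+\tilde c\tilde J+\tilde d\tilde K$ with $\tilde I=\begin{pmatrix}0&-1\\1&0\end{pmatrix}$, $\tilde J=\begin{pmatrix}1&0\\0&-1\end{pmatrix}$, $\tilde K=\begin{pmatrix}0&1\\1&0\end{pmatrix}$ and real coefficients; the principal disk is $\operatorname{PD}(A)=\overline D(\tilde a+|\tilde b|i,\sqrt{\tilde c^2+\tilde d^2})\subset\mathbb C$. $\|\cdot\|_2$ is the operator norm; the signed co-norm is $\lfloor X\rfloor_2=\det X/\|X\|_2$ for $X\ne0$, $\lfloor0\rfloor_2=0$. $\log$ is the principal logarithm. $\operatorname{AC}(x)=\frac{\arccos x}{\sqrt{1-x^2}}$ for $-1<x<1$, $\operatorname{AC}(1)=1$,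 $\operatorname{AC}(x)=\frac{\operatorname{arcosh}x}{\sqrt{x^2-1}}$ for $x>1$. *)

theory Defs
  imports "HOL-Analysis.Analysis"
begin

type_synonym m2 = "real^2^2"

primrec mpow :: "m2 \<Rightarrow> nat \<Rightarrow> m2" where
  "mpow X 0 = mat 1"
| "mpow X (Suc n) = X ** mpow X n"

definition mexp :: "m2 \<Rightarrow> m2" where
  "mexp X = (\<Sum>n. (1 / fact n) *\<^sub>R mpow X n)"

definition is_ceigen :: "m2 \<Rightarrow> complex \<Rightarrow> bool" where
  "is_ceigen X \<mu> \<longleftrightarrow>
     det ((\<chi> i j. (if i = j then \<mu> else 0) - complex_of_real (X $ i $ j)) :: complex^2^2) = 0"

definition plog :: "m2 \<Rightarrow> m2" where
  "plog A = (THE X. mexp X = A \<and> (\<forall>\<mu>. is_ceigen X \<mu> \<longrightarrow> - pi < Im \<mu> \<and> Im \<mu> < pi))"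

definition opnorm2 :: "m2 \<Rightarrow> real" where
  "opnorm2 X = onorm (\<lambda>x. X *v x)"

definition conorm2 :: "m2 \<Rightarrow> real" where
  "conorm2 X = (if X = 0 then 0 else det X / opnorm2 X)"

text \<open>Coefficients w.r.t. Id, I~, J~, K~ and the principal disk.\<close>
definition ca :: "m2 \<Rightarrow> real" where "ca A = (A$1$1 + A$2$2) / 2"
definition cb :: "m2 \<Rightarrow> real" where "cb A = (A$2$1 - A$1$2) / 2"
definition cc :: "m2 \<Rightarrow> real" where "cc A = (A$1$1 - A$2$2) / 2"
definition cd :: "m2 \<Rightarrow> real" where "cd A = (A$1$2 + A$2$1) / 2"

definition PD :: "m2 \<Rightarrow> complex set" where
  "PD A = cball (Complex (ca A) \<bar>cb A\<bar>) (sqrt ((cc A)\<^sup>2 + (cd A)\<^sup>2))"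

definition AC :: "real \<Rightarrow> real" where
  "AC x = (if -1 < x \<and> x < 1 then arccos x / sqrt (1 - x\<^sup>2)
           else if x = 1 then 1
           else if x > 1 then arcosh x / sqrt (x\<^sup>2 - 1)
           else undefined)"

definition fCA :: "real \<Rightarrow> real \<Rightarrow> real \<Rightarrow> real" where
  "fCA a b r = (let \<Delta> = a\<^sup>2 + b\<^sup>2 - r\<^sup>2 in
     sqrt ((ln (sqrt \<Delta>))\<^sup>2 + (b * AC (a / sqrt \<Delta>) / sqrt \<Delta>)\<^sup>2))"

definition fRD :: "real \<Rightarrow> real \<Rightarrow> real \<Rightarrow> real" where
  "fRD a b r = (let \<Delta> = a\<^sup>2 + b\<^sup>2 - r\<^sup>2 in r * AC (a / sqrt \<Delta>) / sqrt \<Delta>)"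

end

theory Submission
  imports Defs
begin

lemma m2_eq: "(X::m2) = Y \<longleftrightarrow> X$1$1 = Y$1$1 \<and> X$1$2 = Y$1$2 \<and> X$2$1 = Y$2$1 \<and> X$2$2 = Y$2$2"
  by (auto simp: vec_eq_iff forall_2)

lemma m2_mult: "((X::m2) ** Y)$i$j = X$i$1 * Y$1$j + X$i$2 * Y$2$j"
  by (simp add: matrix_matrix_mult_def sum_2)

lemma mat1_e [simp]: "(mat 1::m2)$1$1 = 1" "(mat 1::m2)$2$2 = 1" "(mat 1::m2)$1$2 = 0" "(mat 1::m2)$2$1 = 0"
  by (simp_all add: mat_def)

lemma m2_rdistrib: "((A::m2) + B) ** (C::m2) = A ** C + B ** C" by (simp add: m2_eq m2_mult algebra_simps)
lemma m2_ldistrib: "(C::m2) ** ((A::m2) + B) = C ** A + C ** B" by (simp add: m2_eq m2_mult algebra_simps)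
lemma m2_scal_l: "(k *\<^sub>R (A::m2)) ** (B::m2) = k *\<^sub>R (A ** B)" by (simp add: m2_eq m2_mult algebra_simps)
lemma m2_scal_r: "(A::m2) ** (k *\<^sub>R (B::m2)) = k *\<^sub>R (A ** B)" by (simp add: m2_eq m2_mult algebra_simps)

fun uv :: "real \<Rightarrow> real \<Rightarrow> nat \<Rightarrow> real \<times> real" where
  "uv \<xi> \<nu> 0 = (1, 0)"
| "uv \<xi> \<nu> (Suc n) = (\<xi> * fst (uv \<xi> \<nu> n) + \<nu> * snd (uv \<xi> \<nu> n), fst (uv \<xi> \<nu> n) + \<xi> * snd (uv \<xi> \<nu> n))"

lemma mpow_form:
  assumes "(N::m2) ** N = \<nu> *\<^sub>R mat 1"
  shows "mpow (\<xi> *\<^sub>R mat 1 + N) n = fst (uv \<xi> \<nu> n) *\<^sub>R mat 1 + snd (uv \<xi> \<nu> n) *\<^sub>R N"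
proof (induction n)
  case 0 then show ?case by simp
next
  case (Suc n)
  have "mpow (\<xi> *\<^sub>R mat 1 + N) (Suc n) = (\<xi> *\<^sub>R mat 1 + N) ** (fst (uv \<xi> \<nu> n) *\<^sub>R mat 1 + snd (uv \<xi> \<nu> n) *\<^sub>R N)"
    using Suc by simp
  also have "\<dots> = fst (uv \<xi> \<nu> (Suc n)) *\<^sub>R mat 1 + snd (uv \<xi> \<nu> (Suc n)) *\<^sub>R N"
    by (simp add: m2_ldistrib m2_rdistrib m2_scal_l m2_scal_r assms scaleR_add_left algebra_simps)
  finally show ?case .
qed


definition Cf :: "real \<Rightarrow> real" where
  "Cf \<nu> = (if \<nu> > 0 then cosh (sqrt \<nu>) else if \<nu> = 0 then 1 else cos (sqrt (-\<nu>)))"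
definition Sf :: "real \<Rightarrow> real" where
  "Sf \<nu> = (if \<nu> > 0 then sinh (sqrt \<nu>) / sqrt \<nu> else if \<nu> = 0 then 1 else sin (sqrt (-\<nu>)) / sqrt (-\<nu>))"

lemma uv_pow:
  fixes \<omega> :: "'a::{comm_ring_1, real_algebra_1}"
  assumes "\<omega>^2 = of_real \<nu>"
  shows "(of_real \<xi> + \<omega>)^n = of_real (fst (uv \<xi> \<nu> n)) + \<omega> * of_real (snd (uv \<xi> \<nu> n))"
proof (induction n)
  case 0 then show ?case by simp
next
  case (Suc n)
  have "(of_real \<xi> + \<omega>)^Suc n = (of_real \<xi> + \<omega>) * (of_real (fst (uv \<xi> \<nu> n)) + \<omega> * of_real (snd (uv \<xi> \<nu> n)))"
    using Suc by simp
  also have "\<dots> = of_real (\<xi> * fst (uv \<xi> \<nu> n)) + (\<omega>^2) * of_real (snd (uv \<xi> \<nu> n))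
     + \<omega> * of_real (fst (uv \<xi> \<nu> n) + \<xi> * snd (uv \<xi> \<nu> n))"
    by (simp add: algebra_simps power2_eq_square)
  also have "\<dots> = of_real (fst (uv \<xi> \<nu> (Suc n))) + \<omega> * of_real (snd (uv \<xi> \<nu> (Suc n)))"
    by (simp add: assms algebra_simps)
  finally show ?case .
qed

lemma exp_sums_real: "(\<lambda>n. x^n / fact n) sums exp (x::real)"
  using exp_converges[of x] by (simp add: divide_inverse mult.commute)

lemma exp_sums_complex: "(\<lambda>n. x^n / of_real (fact n)) sums exp (x::complex)"
  using exp_converges[of x] by (simp add: divide_inverse mult.commute scaleR_conv_of_real)

lemma uv_sums_pos:
  assumes "\<nu> > 0"
  shows "(\<lambda>n. fst (uv \<xi> \<nu> n) / fact n) sums (exp \<xi> * Cf \<nu>)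
       \<and> (\<lambda>n. snd (uv \<xi> \<nu> n) / fact n) sums (exp \<xi> * Sf \<nu>)"
proof -
  define w where "w = sqrt \<nu>"
  have w2: "w^2 = \<nu>" using assms by (simp add: w_def)
  have wp: "w > 0" using assms by (simp add: w_def)
  have p1: "(\<xi> + w)^n = fst (uv \<xi> \<nu> n) + w * snd (uv \<xi> \<nu> n)" for n
    using uv_pow[of w \<nu> \<xi> n] w2 by simp
  have p2: "(\<xi> + - w)^n = fst (uv \<xi> \<nu> n) + (-w) * snd (uv \<xi> \<nu> n)" for n
    using uv_pow[of "-w" \<nu> \<xi> n] w2 by simp
  have e1: "fst (uv \<xi> \<nu> n) / fact n = ((\<xi> + w)^n / fact n + (\<xi> + - w)^n / fact n) / 2" for n
    using p1[of n] p2[of n] by (simp add: field_simps)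
  have e2: "snd (uv \<xi> \<nu> n) / fact n = (((\<xi> + w)^n / fact n - (\<xi> + - w)^n / fact n) / 2) / w" for n
  proof -
    have d: "(\<xi> + w)^n - (\<xi> + - w)^n = 2 * w * snd (uv \<xi> \<nu> n)" using p1[of n] p2[of n] by simp
    have "(((\<xi> + w)^n / fact n - (\<xi> + - w)^n / fact n) / 2) / w = (((\<xi> + w)^n - (\<xi> + - w)^n) / fact n / 2) / w"
      by (simp add: diff_divide_distrib)
    also have "\<dots> = snd (uv \<xi> \<nu> n) / fact n" unfolding d using wp by simp
    finally show ?thesis by simp
  qed
  have s: "(\<lambda>n. (\<xi> + w)^n / fact n) sums exp (\<xi> + w)" "(\<lambda>n. (\<xi> + - w)^n / fact n) sums exp (\<xi> + - w)"
    by (rule exp_sums_real)+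
  have "(\<lambda>n. fst (uv \<xi> \<nu> n) / fact n) sums ((exp (\<xi> + w) + exp (\<xi> + - w)) / 2)"
    unfolding e1 by (intro sums_divide sums_add s)
  moreover have "(exp (\<xi> + w) + exp (\<xi> + - w)) / 2 = exp \<xi> * Cf \<nu>"
    using assms by (simp add: Cf_def cosh_def w_def[symmetric] exp_add exp_diff exp_minus field_simps)
  moreover have "(\<lambda>n. snd (uv \<xi> \<nu> n) / fact n) sums (((exp (\<xi> + w) - exp (\<xi> + - w)) / 2) / w)"
    unfolding e2 by (intro sums_divide sums_diff s)
  moreover have "((exp (\<xi> + w) - exp (\<xi> + - w)) / 2) / w = exp \<xi> * Sf \<nu>"
    using assms by (simp add: Sf_def sinh_def w_def[symmetric] exp_add exp_diff exp_minus field_simps)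
  ultimately show ?thesis by simp
qed

lemma uv_sums_neg:
  assumes "\<nu> < 0"
  shows "(\<lambda>n. fst (uv \<xi> \<nu> n) / fact n) sums (exp \<xi> * Cf \<nu>)
       \<and> (\<lambda>n. snd (uv \<xi> \<nu> n) / fact n) sums (exp \<xi> * Sf \<nu>)"
proof -
  define t where "t = sqrt (-\<nu>)"
  have tp: "t > 0" using assms by (simp add: t_def)
  have t2: "t^2 = -\<nu>" using assms by (simp add: t_def)
  define w :: complex where "w = \<i> * of_real t"
  have w2: "w^2 = of_real \<nu>" using t2 by (simp add: w_def power_mult_distrib flip: of_real_power)
  have wnz: "w \<noteq> 0" using tp by (simp add: w_def)
  have p1: "(of_real \<xi> + w)^n = of_real (fst (uv \<xi> \<nu> n)) + w * of_real (snd (uv \<xi> \<nu> n))" for n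
    using uv_pow[of w \<nu> \<xi> n] w2 by simp
  have p2: "(of_real \<xi> + - w)^n = of_real (fst (uv \<xi> \<nu> n)) + (-w) * of_real (snd (uv \<xi> \<nu> n))" for n
    using uv_pow[of "-w" \<nu> \<xi> n] w2 by simp
  have fz: "of_real (fact n) \<noteq> (0::complex)" for n by simp
  have e1: "of_real (fst (uv \<xi> \<nu> n) / fact n) = ((of_real \<xi> + w)^n / of_real (fact n) + (of_real \<xi> + - w)^n / of_real (fact n)) / (2::complex)" for n
    using p1[of n] p2[of n] fz[of n] by (simp add: field_simps)
  have e2: "of_real (snd (uv \<xi> \<nu> n) / fact n) = (((of_real \<xi> + w)^n / of_real (fact n) - (of_real \<xi> + - w)^n / of_real (fact n)) / 2) / (w::complex)" for n
  proof -
    have d: "(of_real \<xi> + w)^n - (of_real \<xi> + - w)^n = 2 * w * of_real (snd (uv \<xi> \<nu> n))" using p1[of n] p2[of n] by simp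
    have "(((of_real \<xi> + w)^n / of_real (fact n) - (of_real \<xi> + - w)^n / of_real (fact n)) / 2) / (w::complex)
       = (((of_real \<xi> + w)^n - (of_real \<xi> + - w)^n) / of_real (fact n) / 2) / w"
      by (simp add: diff_divide_distrib)
    also have "\<dots> = of_real (snd (uv \<xi> \<nu> n) / fact n)" unfolding d using wnz by simp
    finally show ?thesis by simp
  qed
  have s: "(\<lambda>n. (of_real \<xi> + w)^n / of_real (fact n)) sums exp (of_real \<xi> + w)"
          "(\<lambda>n. (of_real \<xi> + - w)^n / of_real (fact n)) sums exp (of_real \<xi> + - w)"
    by (rule exp_sums_complex)+
  have X1: "(\<lambda>n. of_real (fst (uv \<xi> \<nu> n) / fact n)) sums ((exp (of_real \<xi> + w) + exp (of_real \<xi> + - w)) / (2::complex))"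
    unfolding e1 by (intro sums_divide sums_add s)
  have Z1: "(exp (of_real \<xi> + w) + exp (of_real \<xi> + - w)) / (2::complex) = of_real (exp \<xi> * Cf \<nu>)"
    using assms by (simp add: complex_eq_iff Cf_def t_def[symmetric] Re_exp Im_exp w_def)
  have A1: "(\<lambda>n. fst (uv \<xi> \<nu> n) / fact n) sums (exp \<xi> * Cf \<nu>)"
    using X1 unfolding Z1 sums_of_real_iff .
  have X2: "(\<lambda>n. of_real (snd (uv \<xi> \<nu> n) / fact n)) sums (((exp (of_real \<xi> + w) - exp (of_real \<xi> + - w)) / 2) / (w::complex))"
    unfolding e2 by (intro sums_divide sums_diff s)
  have Z2: "((exp (of_real \<xi> + w) - exp (of_real \<xi> + - w)) / 2) / (w::complex) = of_real (exp \<xi> * Sf \<nu>)"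
  proof -
    have "exp (of_real \<xi> + w) - exp (of_real \<xi> + - w) = 2 * \<i> * of_real (exp \<xi> * sin t)"
      by (simp add: complex_eq_iff Re_exp Im_exp w_def)
    then show ?thesis using assms tp by (simp add: Sf_def t_def[symmetric] w_def field_simps)
  qed
  have A2: "(\<lambda>n. snd (uv \<xi> \<nu> n) / fact n) sums (exp \<xi> * Sf \<nu>)"
    using X2 unfolding Z2 sums_of_real_iff .
  from A1 A2 show ?thesis ..
qed

lemma uv_zero1: "fst (uv \<xi> 0 n) = \<xi>^n"
  by (induction n) (auto simp: algebra_simps)
lemma uv_zero2: "snd (uv \<xi> 0 (Suc n)) = real (Suc n) * \<xi>^n"
  by (induction n) (auto simp: algebra_simps uv_zero1)
lemmas uv_zero = uv_zero1 uv_zero2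

lemma uv_sums_zero:
  shows "(\<lambda>n. fst (uv \<xi> 0 n) / fact n) sums (exp \<xi> * Cf 0)
       \<and> (\<lambda>n. snd (uv \<xi> 0 n) / fact n) sums (exp \<xi> * Sf 0)"
proof
  show "(\<lambda>n. fst (uv \<xi> 0 n) / fact n) sums (exp \<xi> * Cf 0)"
    using exp_sums_real[of \<xi>] by (simp add: uv_zero Cf_def)
  have "(\<lambda>n. snd (uv \<xi> 0 (Suc n)) / fact (Suc n)) = (\<lambda>n. \<xi>^n / fact n)"
  proof
    fix n show "snd (uv \<xi> 0 (Suc n)) / fact (Suc n) = \<xi>^n / fact n"
      by (simp add: uv_zero2 del: uv.simps)
  qed
  then have "(\<lambda>n. snd (uv \<xi> 0 (Suc n)) / fact (Suc n)) sums exp \<xi>"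
    using exp_sums_real by simp
  then show "(\<lambda>n. snd (uv \<xi> 0 n) / fact n) sums (exp \<xi> * Sf 0)"
    by (subst (asm) sums_Suc_iff) (simp add: Sf_def)
qed

lemma uv_sums:
  "(\<lambda>n. fst (uv \<xi> \<nu> n) / fact n) sums (exp \<xi> * Cf \<nu>)
       \<and> (\<lambda>n. snd (uv \<xi> \<nu> n) / fact n) sums (exp \<xi> * Sf \<nu>)"
  using uv_sums_pos[of \<nu> \<xi>] uv_sums_neg[of \<nu> \<xi>] uv_sums_zero[of \<xi>]
  by (cases "\<nu> > 0"; cases "\<nu> = 0") auto

lemma mexp_form:
  assumes "(N::m2) ** N = \<nu> *\<^sub>R mat 1"
  shows "mexp (\<xi> *\<^sub>R mat 1 + N) = exp \<xi> *\<^sub>R (Cf \<nu> *\<^sub>R mat 1 + Sf \<nu> *\<^sub>R N)"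
proof -
  have eq: "(\<lambda>n. (1 / fact n) *\<^sub>R mpow (\<xi> *\<^sub>R mat 1 + N) n)
     = (\<lambda>n. (fst (uv \<xi> \<nu> n) / fact n) *\<^sub>R mat 1 + (snd (uv \<xi> \<nu> n) / fact n) *\<^sub>R N)"
    by (simp add: mpow_form[OF assms] scaleR_add_right)
  have "(\<lambda>n. (fst (uv \<xi> \<nu> n) / fact n) *\<^sub>R mat 1 + (snd (uv \<xi> \<nu> n) / fact n) *\<^sub>R N)
      sums ((exp \<xi> * Cf \<nu>) *\<^sub>R mat 1 + (exp \<xi> * Sf \<nu>) *\<^sub>R N)"
    using uv_sums[of \<xi> \<nu>] by (intro sums_add sums_scaleR_left) auto
  then show ?thesis unfolding mexp_def eq
    by (simp add: sums_unique[symmetric] scaleR_add_right)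
qed


definition nu0 :: "real \<Rightarrow> real" where "nu0 x = (AC x)^2 * (x^2 - 1)"

lemma nu0_val:
  assumes "x > -1"
  shows "nu0 x = (if x < 1 then - ((arccos x)^2) else if x = 1 then 0 else (arcosh x)^2)"
proof -
  consider "x < 1" | "x = 1" | "x > 1" by linarith
  then show ?thesis
  proof cases
    case 1
    then have p: "1 - x^2 > 0" using assms by (simp add: abs_square_less_1)
    have "nu0 x = (arccos x)^2 / (1 - x^2) * (x^2 - 1)"
      using 1 assms p by (simp add: nu0_def AC_def power_divide)
    also have "\<dots> = - ((arccos x)^2)" using p by (simp add: field_simps)
    finally show ?thesis using 1 by simp
  next
    case 2 then show ?thesis by (simp add: nu0_def)
  next
    case 3
    then have p: "x^2 - 1 > 0" using one_less_power[OF 3, of 2] by simp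
    have "nu0 x = (arcosh x)^2 / (x^2 - 1) * (x^2 - 1)"
      using 3 assms p by (simp add: nu0_def AC_def power_divide)
    also have "\<dots> = (arcosh x)^2" using p by (simp add: field_simps)
    finally show ?thesis using 3 by simp
  qed
qed

lemma AC_facts:
  assumes "x > -1"
  shows "AC x > 0 \<and> Cf (nu0 x) = x \<and> Sf (nu0 x) * AC x = 1 \<and> nu0 x > - (pi^2)"
proof -
  consider "x < 1" | "x = 1" | "x > 1" by linarith
  then show ?thesis
  proof cases
    case 1
    then have p: "1 - x^2 > 0" using assms by (simp add: abs_square_less_1)
    have ab: "0 < arccos x" "arccos x < pi" using arccos_lt_bounded[of x] assms 1 by auto
    have nv: "nu0 x = - ((arccos x)^2)" using nu0_val[OF assms] 1 by simp
    have sq: "sqrt (- nu0 x) = arccos x" using nv ab by simp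
    have ng: "nu0 x < 0" using nv ab by simp
    have AC: "AC x = arccos x / sqrt (1 - x^2)" using 1 assms by (simp add: AC_def)
    have "AC x > 0" using AC ab p by simp
    moreover have "Cf (nu0 x) = x" using ng sq assms 1 by (simp add: Cf_def)
    moreover have "Sf (nu0 x) * AC x = 1"
      using ng sq assms 1 ab p by (simp add: Sf_def AC sin_arccos)
    moreover have "nu0 x > - (pi^2)" using nv ab
      by (simp add: power_strict_mono)
    ultimately show ?thesis by blast
  next
    case 2 then show ?thesis
      by (simp add: nu0_def Cf_def Sf_def AC_def)
  next
    case 3
    then have p: "x^2 - 1 > 0" using one_less_power[OF 3, of 2] by simp
    have ab: "0 < arcosh x" using 3 by simp
    have nv: "nu0 x = (arcosh x)^2" using nu0_val[OF assms] 3 by simp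
    have sq: "sqrt (nu0 x) = arcosh x" using nv ab by simp
    have ng: "nu0 x > 0" using nv ab by simp
    have AC: "AC x = arcosh x / sqrt (x^2 - 1)" using 3 by (simp add: AC_def)
    have "AC x > 0" using AC ab p by simp
    moreover have "Cf (nu0 x) = x" using ng sq 3 by (simp add: Cf_def)
    moreover have "Sf (nu0 x) * AC x = 1"
      using ng sq 3 ab p by (simp add: Sf_def AC sinh_arcosh_real) (metis less_numeral_extra(3) p diff_self)
    moreover have "nu0 x > - (pi^2)" using ng by (smt (verit) zero_le_power2)
    ultimately show ?thesis by blast
  qed
qed

lemma Cf_unique:
  assumes "\<nu> > - (pi^2)" "Cf \<nu> = x"
  shows "x > -1 \<and> \<nu> = nu0 x"
proof -
  consider "\<nu> > 0" | "\<nu> = 0" | "\<nu> < 0" by linarith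
  then show ?thesis
  proof cases
    case 1
    define t where "t = sqrt \<nu>"
    have t: "t > 0" "t^2 = \<nu>" using 1 by (auto simp: t_def)
    have cx: "cosh t = x" using assms 1 by (simp add: Cf_def t_def)
    have "cosh 0 < cosh t" using t by (intro cosh_real_strict_mono) auto
    then have x1: "x > 1" using cx by simp
    have "arcosh x = t" using cx t arcosh_cosh_real[of t] by simp
    then show ?thesis using nu0_val[of x] x1 t by simp
  next
    case 2 then show ?thesis using assms nu0_val[of 1] by (simp add: Cf_def)
  next
    case 3
    define t where "t = sqrt (-\<nu>)"
    have t: "t > 0" "t^2 = -\<nu>" using 3 by (auto simp: t_def)
    have tp: "t < pi"
    proof (rule ccontr)
      assume "\<not> t < pi"
      then have "pi^2 \<le> t^2" by (simp add: power_mono)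
      then show False using t assms by simp
    qed
    have cx: "cos t = x" using assms 3 by (simp add: Cf_def t_def)
    have "cos t < cos 0" using t tp by (intro cos_monotone_0_pi) auto
    then have x1: "x < 1" using cx by simp
    have "cos pi < cos t" using t tp by (intro cos_monotone_0_pi) auto
    then have x2: "x > -1" using cx by simp
    have "arccos x = t" using cx t tp arccos_cos[of t] by simp
    then show ?thesis using nu0_val[of x] x1 x2 t by simp
  qed
qed


definition xi :: "m2 \<Rightarrow> real" where "xi X = (X$1$1 + X$2$2) / 2"
definition Nm :: "m2 \<Rightarrow> m2" where "Nm X = X - xi X *\<^sub>R mat 1"
definition nu :: "m2 \<Rightarrow> real" where "nu X = ((X$1$1 - X$2$2)/2)^2 + X$1$2 * X$2$1"

lemma D1: "X = xi X *\<^sub>R mat 1 + Nm X" by (simp add: Nm_def)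
lemma D2: "Nm X ** Nm X = nu X *\<^sub>R mat 1"
  by (simp add: m2_eq m2_mult Nm_def xi_def nu_def field_simps power2_eq_square)
lemma D3: "det (u *\<^sub>R mat 1 + v *\<^sub>R Nm X) = u^2 - v^2 * nu X"
  by (simp add: det_2 Nm_def xi_def nu_def field_simps power2_eq_square)
lemma D4: "xi (u *\<^sub>R mat 1 + v *\<^sub>R Nm X) = u"
          "Nm (u *\<^sub>R mat 1 + v *\<^sub>R Nm X) = v *\<^sub>R Nm X"
          "nu (u *\<^sub>R mat 1 + v *\<^sub>R Nm X) = v^2 * nu X"
  by (simp_all add: m2_eq Nm_def xi_def nu_def field_simps power2_eq_square)
lemma D6: "det X = (xi X)^2 - nu X"
  by (simp add: det_2 xi_def nu_def field_simps power2_eq_square)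

lemma D5: "is_ceigen X \<mu> \<longleftrightarrow> (\<mu> - of_real (xi X))^2 = of_real (nu X)"
proof -
  have "is_ceigen X \<mu> \<longleftrightarrow> (\<mu> - of_real (X$1$1)) * (\<mu> - of_real (X$2$2)) - of_real (X$1$2) * of_real (X$2$1) = 0"
    by (simp add: is_ceigen_def det_2)
  also have "(\<mu> - of_real (X$1$1)) * (\<mu> - of_real (X$2$2)) - of_real (X$1$2) * of_real (X$2$1)
      = (\<mu> - of_real (xi X))^2 - of_real (nu X)"
    by (simp add: xi_def nu_def field_simps power2_eq_square)
  finally show ?thesis by simp
qed

lemma E1:
  fixes w :: complex
  assumes "w^2 = of_real \<nu>" "\<nu> > - (pi^2)"
  shows "- pi < Im w \<and> Im w < pi"
proof -
  have r: "(Re w)^2 - (Im w)^2 = \<nu>"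
    using arg_cong[OF assms(1), of Re] by (simp add: power2_eq_square)
  have i: "Re w = 0 \<or> Im w = 0"
    using arg_cong[OF assms(1), of Im] by (auto simp: power2_eq_square)
  show ?thesis
  proof (cases "Im w = 0")
    case True then show ?thesis by simp
  next
    case False
    then have "Re w = 0" using i by simp
    then have "(Im w)^2 < pi^2" using r assms(2) by simp
    then have "\<bar>Im w\<bar> < pi" using power2_less_imp_less[of "\<bar>Im w\<bar>" pi] by simp
    then show ?thesis by (simp add: abs_less_iff)
  qed
qed

lemma CS_id: "(Cf \<nu>)^2 - \<nu> * (Sf \<nu>)^2 = 1"
proof -
  consider "\<nu> > 0" | "\<nu> = 0" | "\<nu> < 0" by linarith
  then show ?thesis
  proof cases
    case 1
    then show ?thesis by (simp add: Cf_def Sf_def power_divide cosh_square_eq)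
  next
    case 2 then show ?thesis by (simp add: Cf_def Sf_def)
  next
    case 3
    then have "(Cf \<nu>)^2 - \<nu> * (Sf \<nu>)^2 = (cos (sqrt (-\<nu>)))^2 + (sin (sqrt (-\<nu>)))^2"
      by (simp add: Cf_def Sf_def power_divide)
    then show ?thesis by simp
  qed
qed

lemma mexp_X: "mexp X = exp (xi X) *\<^sub>R (Cf (nu X) *\<^sub>R mat 1 + Sf (nu X) *\<^sub>R Nm X)"
  using mexp_form[OF D2[of X], of "xi X"] D1[of X] by simp

definition Lg :: "m2 \<Rightarrow> m2" where
  "Lg A = ln (sqrt (det A)) *\<^sub>R mat 1 + (AC (xi A / sqrt (det A)) / sqrt (det A)) *\<^sub>R Nm A"

definition logP :: "m2 \<Rightarrow> m2 \<Rightarrow> bool" where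
  "logP A X \<longleftrightarrow> mexp X = A \<and> (\<forall>\<mu>. is_ceigen X \<mu> \<longrightarrow> - pi < Im \<mu> \<and> Im \<mu> < pi)"

lemma Lg_ok:
  assumes "det A > 0" "xi A / sqrt (det A) > -1"
  shows "logP A (Lg A)"
proof -
  define s where "s = sqrt (det A)"
  define x where "x = xi A / s"
  define \<beta> where "\<beta> = AC x / s"
  have s: "s > 0" "s^2 = det A" using assms by (auto simp: s_def)
  have x: "x > -1" using assms by (simp add: x_def s_def)
  note F = AC_facts[OF x]
  have L: "Lg A = ln s *\<^sub>R mat 1 + \<beta> *\<^sub>R Nm A" by (simp add: Lg_def s_def x_def \<beta>_def)
  have sx: "s^2 * x^2 = (xi A)^2" using s(1) by (simp add: x_def power_divide)
  have nuA: "nu A = s^2 * (x^2 - 1)"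
    using D6[of A] s sx by (simp add: algebra_simps)
  have nuL: "\<beta>^2 * nu A = nu0 x"
    using s(1) by (simp add: nuA \<beta>_def nu0_def power_divide field_simps)
  have NN: "(\<beta> *\<^sub>R Nm A) ** (\<beta> *\<^sub>R Nm A) = (\<beta>^2 * nu A) *\<^sub>R mat 1"
    by (simp add: m2_scal_l m2_scal_r D2 power2_eq_square)
  have "mexp (Lg A) = s *\<^sub>R (Cf (nu0 x) *\<^sub>R mat 1 + Sf (nu0 x) *\<^sub>R (\<beta> *\<^sub>R Nm A))"
    unfolding L mexp_form[OF NN] nuL using s by simp
  also have "\<dots> = xi A *\<^sub>R mat 1 + (Sf (nu0 x) * AC x) *\<^sub>R Nm A"
    using s F by (simp add: x_def \<beta>_def scaleR_add_right)
  also have "\<dots> = A" using F D1[of A] by simp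
  finally have E: "mexp (Lg A) = A" .
  have "- pi < Im \<mu> \<and> Im \<mu> < pi" if "is_ceigen (Lg A) \<mu>" for \<mu>
  proof -
    have "(\<mu> - of_real (ln s))^2 = of_real (nu0 x)"
      using that unfolding D5 L D4 nuL .
    from E1[OF this] F show ?thesis by simp
  qed
  with E show ?thesis by (simp add: logP_def)
qed

lemma Lg_unique:
  assumes "logP A X"
  shows "X = Lg A"
proof -
  define \<xi> where "\<xi> = xi X"
  define \<nu> where "\<nu> = nu X"
  define N where "N = Nm X"
  have A: "A = (exp \<xi> * Cf \<nu>) *\<^sub>R mat 1 + (exp \<xi> * Sf \<nu>) *\<^sub>R Nm X"
    using assms mexp_X[of X] by (simp add: logP_def \<xi>_def \<nu>_def scaleR_add_right)
  have xiA: "xi A = exp \<xi> * Cf \<nu>" by (subst A, rule D4)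
  have NmA: "Nm A = (exp \<xi> * Sf \<nu>) *\<^sub>R N" unfolding N_def by (subst A, rule D4)
  have "det A = (exp \<xi> * Cf \<nu>)^2 - (exp \<xi> * Sf \<nu>)^2 * \<nu>" unfolding \<nu>_def by (subst A[unfolded \<nu>_def], rule D3)
  also have "\<dots> = (exp \<xi>)^2 * ((Cf \<nu>)^2 - \<nu> * (Sf \<nu>)^2)" by (simp add: algebra_simps power_mult_distrib)
  also have "\<dots> = (exp \<xi>)^2" by (simp add: CS_id)
  finally have dA: "det A = (exp \<xi>)^2" .
  have sA: "sqrt (det A) = exp \<xi>" using dA by simp
  have nb: "\<nu> > - (pi^2)"
  proof (cases "\<nu> < 0")
    case True
    define \<mu> where "\<mu> = of_real \<xi> + \<i> * of_real (sqrt (-\<nu>))"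
    have "(\<mu> - of_real (xi X))^2 = of_real (nu X)"
      using True by (simp add: \<mu>_def \<xi>_def \<nu>_def power_mult_distrib flip: of_real_power)
    then have "is_ceigen X \<mu>" by (simp add: D5)
    then have "Im \<mu> < pi" using assms by (simp add: logP_def)
    then have "sqrt (-\<nu>) < pi" by (simp add: \<mu>_def)
    then have "(sqrt (-\<nu>))^2 < pi^2" using True by (intro power_strict_mono) auto
    then show ?thesis using True by simp
  next
    case False
    moreover have "0 < pi^2" by simp
    ultimately show ?thesis by linarith
  qed
  have xeq: "xi A / sqrt (det A) = Cf \<nu>" using xiA sA by simp
  from Cf_unique[OF nb xeq[symmetric]] have x: "xi A / sqrt (det A) > -1" and nv: "\<nu> = nu0 (xi A / sqrt (det A))"
    by auto
  have SA: "Sf \<nu> * AC (xi A / sqrt (det A)) = 1" using AC_facts[OF x] nv by simp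
  have "Lg A = \<xi> *\<^sub>R mat 1 + (AC (xi A / sqrt (det A)) / exp \<xi> * (exp \<xi> * Sf \<nu>)) *\<^sub>R N"
    unfolding Lg_def sA NmA by simp
  also have "\<dots> = \<xi> *\<^sub>R mat 1 + N" using SA by (simp add: field_simps)
  also have "\<dots> = X" using D1[of X] by (simp add: \<xi>_def N_def)
  finally show ?thesis by simp
qed

lemma plog_eq:
  assumes "det A > 0" "xi A / sqrt (det A) > -1"
  shows "plog A = Lg A"
  unfolding plog_def using Lg_ok[OF assms] Lg_unique
  by (intro the_equality) (auto simp: logP_def)


lemma form_bound:
  fixes x y z w v1 v2 :: real
  defines "F \<equiv> (x*z + y*w) * (v1^2 - v2^2) + 2 * (x*w - y*z) * v1 * v2"
  shows "F \<le> sqrt (x^2 + y^2) * sqrt (z^2 + w^2) * (v1^2 + v2^2)"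
proof -
  define m where "m = sqrt (x^2 + y^2) * sqrt (z^2 + w^2)"
  have m0: "m \<ge> 0" by (simp add: m_def)
  have m2: "m^2 = (x*z + y*w)^2 + (x*w - y*z)^2"
    by (simp add: m_def power_mult_distrib algebra_simps power2_eq_square)
  have "(m * (v1^2 + v2^2))^2 - F^2 = (2*(x*z + y*w) * v1 * v2 - (x*w - y*z)*(v1^2 - v2^2))^2"
    unfolding F_def power_mult_distrib m2 by (simp add: algebra_simps power2_eq_square)
  then have "F^2 \<le> (m * (v1^2 + v2^2))^2" by (smt (verit) zero_le_power2)
  then have "F \<le> m * (v1^2 + v2^2)" by (rule power2_le_imp_le) (simp add: m0)
  then show ?thesis by (simp add: m_def)
qed

lemma form_attain:
  fixes \<alpha> \<beta> m :: real
  assumes "m^2 = \<alpha>^2 + \<beta>^2"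
  shows "\<alpha> * ((m+\<alpha>)^2 - \<beta>^2) + 2 * \<beta> * (m+\<alpha>) * \<beta> = m * ((m+\<alpha>)^2 + \<beta>^2)"
proof -
  have "\<alpha> * ((m+\<alpha>)^2 - \<beta>^2) + 2 * \<beta> * (m+\<alpha>) * \<beta> - m * ((m+\<alpha>)^2 + \<beta>^2)
      = (m + \<alpha>) * (\<alpha>^2 + \<beta>^2 - m^2)"
    by (simp add: algebra_simps power2_eq_square)
  then show ?thesis using assms by simp
qed

lemma norm_v2: "norm (v::real^2) = sqrt ((v$1)^2 + (v$2)^2)"
  by (simp add: norm_vec_def L2_set_def sum_2)

lemma norm_v2_sq: "(norm (v::real^2))^2 = (v$1)^2 + (v$2)^2"
  by (simp add: norm_v2)

lemma mv2: "((X::m2) *v v)$1 = X$1$1 * v$1 + X$1$2 * v$2" "((X::m2) *v v)$2 = X$2$1 * v$1 + X$2$2 * v$2"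
  by (simp_all add: matrix_vector_mult_def sum_2)

lemma entries:
  "(X::m2)$1$1 = ca X + cc X" "X$1$2 = cd X - cb X" "X$2$1 = cb X + cd X" "X$2$2 = ca X - cc X"
  by (simp_all add: ca_def cb_def cc_def cd_def field_simps)

lemma sq_expand:
  fixes x y z w v1 v2 :: real
  shows "((x+z) * v1 + (w-y) * v2)^2 + ((y+w) * v1 + (x-z) * v2)^2
     = (x^2+y^2+z^2+w^2) * (v1^2+v2^2) + 2 * ((x*z + y*w) * (v1^2 - v2^2) + 2 * (x*w - y*z) * v1 * v2)"
  by (simp add: algebra_simps power2_eq_square)

lemma opnorm_formula:
  "opnorm2 X = sqrt ((ca X)^2 + (cb X)^2) + sqrt ((cc X)^2 + (cd X)^2)"
proof -
  define x y z w where "x = ca X" "y = cb X" "z = cc X" "w = cd X"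
  define p s where "p = sqrt (x^2 + y^2)" "s = sqrt (z^2 + w^2)"
  have p0: "p \<ge> 0" "p^2 = x^2 + y^2" and s0: "s \<ge> 0" "s^2 = z^2 + w^2" by (simp_all add: p_s_def)
  have nXv: "(norm (X *v v))^2 = (p^2 + s^2) * (norm v)^2 + 2 * ((x*z + y*w) * ((v$1)^2 - (v$2)^2) + 2 * (x*w - y*z) * v$1 * v$2)" for v
    unfolding norm_v2_sq mv2 entries x_y_z_w_def[symmetric] p0(2) s0(2)
    by (simp add: algebra_simps power2_eq_square)
  have up: "norm (X *v v) \<le> (p + s) * norm v" for v
  proof -
    have "(x*z + y*w) * ((v$1)^2 - (v$2)^2) + 2 * (x*w - y*z) * v$1 * v$2 \<le> p * s * (norm v)^2"
      using form_bound[of x z y w "v$1" "v$2"] by (simp add: p_s_def norm_v2)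
    then have "(norm (X *v v))^2 \<le> ((p + s) * norm v)^2"
      unfolding nXv by (simp add: power2_eq_square algebra_simps)
    then show ?thesis by (rule power2_le_imp_le) (simp add: p0 s0)
  qed
  define \<alpha> \<beta> m where "\<alpha> = x*z + y*w" "\<beta> = x*w - y*z" "m = p * s"
  have m2: "m^2 = \<alpha>^2 + \<beta>^2" unfolding \<alpha>_\<beta>_m_def power_mult_distrib p0(2) s0(2)
    by (simp add: algebra_simps power2_eq_square)
  obtain v :: "real^2" where v0: "v \<noteq> 0" and vF: "\<alpha> * ((v$1)^2 - (v$2)^2) + 2 * \<beta> * v$1 * v$2 = m * (norm v)^2"
  proof (cases "m + \<alpha> = 0 \<and> \<beta> = 0")
    case True
    then show ?thesis by (intro that[of "vector [0, 1]"]) (auto simp: norm_v2_sq vec_eq_iff forall_2)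
  next
    case False
    have nz: "vector [m + \<alpha>, \<beta>] \<noteq> (0::real^2)" using False by (auto simp: vec_eq_iff forall_2)
    show ?thesis using form_attain[OF m2] by (intro that[OF nz]) (simp add: norm_v2_sq)
  qed
  have "(norm (X *v v))^2 = ((p + s) * norm v)^2"
    unfolding nXv using vF by (simp add: \<alpha>_\<beta>_m_def power2_eq_square algebra_simps)
  then have eqv: "norm (X *v v) = (p + s) * norm v"
    using p0 s0 by (simp add: power2_eq_iff_nonneg)
  have "norm (X *v v) / norm v \<le> onorm ((*v) X)" by (rule le_onorm) simp
  then have lo: "p + s \<le> onorm ((*v) X)" using v0 eqv by simp
  have "onorm ((*v) X) \<le> p + s" by (rule onorm_le) (rule up)
  with lo have "onorm ((*v) X) = p + s" by simp
  then show ?thesis by (simp add: opnorm2_def p_s_def x_y_z_w_def)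
qed


lemma det_coef: "det (X::m2) = (ca X)^2 + (cb X)^2 - (cc X)^2 - (cd X)^2"
  by (simp add: det_2 ca_def cb_def cc_def cd_def field_simps power2_eq_square)

lemma xi_ca: "xi X = ca X" by (simp add: xi_def ca_def)

lemma det_shift: "det (A - t *\<^sub>R mat 1) = (xi A - t)^2 - nu A"
  using D6[of "A - t *\<^sub>R mat 1"] by (simp add: xi_def nu_def diff_divide_distrib)

lemma coef_L:
  "ca (u *\<^sub>R mat 1 + v *\<^sub>R Nm X) = u" "cb (u *\<^sub>R mat 1 + v *\<^sub>R Nm X) = v * cb X"
  "cc (u *\<^sub>R mat 1 + v *\<^sub>R Nm X) = v * cc X" "cd (u *\<^sub>R mat 1 + v *\<^sub>R Nm X) = v * cd X"
  by (simp_all add: ca_def cb_def cc_def cd_def Nm_def xi_def field_simps)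

lemma spectral_cond:
  assumes noneg: "\<forall>t::real. t \<le> 0 \<longrightarrow> det (A - t *\<^sub>R mat 1) \<noteq> 0"
  shows "det A > 0 \<and> xi A / sqrt (det A) > -1"
proof -
  have f: "(xi A - t)^2 \<noteq> nu A" if "t \<le> 0" for t using noneg that det_shift[of A t] by auto
  have D: "det A = (xi A)^2 - nu A" by (rule D6)
  have dpos: "det A > 0"
  proof (rule ccontr)
    assume "\<not> det A > 0"
    then have "nu A \<ge> (xi A)^2" using D by simp
    define t where "t = xi A - sqrt (nu A)"
    have "sqrt ((xi A)^2) \<le> sqrt (nu A)" using \<open>nu A \<ge> _\<close> by (rule real_sqrt_le_mono)
    then have "t \<le> 0" by (simp add: t_def)
    moreover have "(xi A - t)^2 = nu A" using \<open>nu A \<ge> _\<close> by (simp add: t_def) (smt (verit) zero_le_power2)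
    ultimately show False using f by blast
  qed
  have "xi A / sqrt (det A) > -1"
  proof (rule ccontr)
    assume "\<not> xi A / sqrt (det A) > -1"
    then have q: "xi A / sqrt (det A) \<le> -1" by simp
    have sp: "sqrt (det A) > 0" using dpos by simp
    have le: "xi A \<le> - sqrt (det A)" using q pos_divide_le_eq[OF sp] by simp
    then have "sqrt (det A) \<le> - xi A" by simp
    then have "(sqrt (det A))^2 \<le> (- xi A)^2" by (rule power_mono) (use dpos in simp)
    then have "(sqrt (det A))^2 \<le> (xi A)^2" using dpos by simp
    then have nn: "nu A \<ge> 0" using D dpos by simp
    define t where "t = xi A + sqrt (nu A)"
    have "sqrt (nu A) \<le> sqrt ((xi A)^2)" using D dpos by (intro real_sqrt_le_mono) simp
    then have "t \<le> 0" using le dpos by (simp add: t_def) (smt (verit) real_sqrt_ge_zero)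
    moreover have "(xi A - t)^2 = nu A" using nn by (simp add: t_def)
    ultimately show False using f by blast
  qed
  with dpos show ?thesis by blast
qed

theorem lemma10p1:
  fixes A :: "real^2^2" and a b r :: real
  assumes noneg: "\<forall>t::real. t \<le> 0 \<longrightarrow> det (A - t *\<^sub>R mat 1) \<noteq> 0"
    and pd: "PD A = cball (Complex a b) r"
  shows "opnorm2 (plog A) = fCA a b r + fRD a b r
       \<and> conorm2 (plog A) = fCA a b r - fRD a b r
       \<and> (det A = 1 \<longrightarrow> fCA a b r = AC a * b \<and> fRD a b r = AC a * r)"
proof -
  have "Complex (ca A) \<bar>cb A\<bar> = Complex a b \<and> sqrt ((cc A)\<^sup>2 + (cd A)\<^sup>2) = r"
  proof -
    have "(cc A)\<^sup>2 + (cd A)\<^sup>2 \<ge> 0" by simp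
    then have "\<not> ((cc A)\<^sup>2 + (cd A)\<^sup>2 < 0)" by linarith
    moreover have "((cc A)\<^sup>2 + (cd A)\<^sup>2 < 0 \<and> r < 0) \<or> (Complex (ca A) \<bar>cb A\<bar> = Complex a b \<and> sqrt ((cc A)\<^sup>2 + (cd A)\<^sup>2) = r)"
      using pd unfolding PD_def cball_eq_cball_iff by simp
    ultimately show ?thesis by blast
  qed
  then have ab: "a = ca A" "b = \<bar>cb A\<bar>" and rr: "r = sqrt ((cc A)\<^sup>2 + (cd A)\<^sup>2)" by auto
  have r0: "r \<ge> 0" by (simp add: rr)
  from spectral_cond[OF noneg] have dpos: "det A > 0" and xg: "xi A / sqrt (det A) > -1" by auto
  define s where "s = sqrt (det A)"
  define x where "x = a / s"
  define \<beta> where "\<beta> = AC x / s"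
  have s0: "s > 0" using dpos by (simp add: s_def)
  have x1: "x > -1" using xg by (simp add: x_def s_def ab xi_ca)
  have ACp: "AC x > 0" using AC_facts[OF x1] by simp
  have b0: "\<beta> \<ge> 0" using ACp s0 by (simp add: \<beta>_def)
  have Delta: "a^2 + b^2 - r^2 = det A" by (simp add: ab rr det_coef)
  have L: "plog A = ln s *\<^sub>R mat 1 + \<beta> *\<^sub>R Nm A"
    using plog_eq[OF dpos xg] by (simp add: Lg_def s_def x_def \<beta>_def ab xi_ca)
  define P where "P = sqrt ((ln s)^2 + (\<beta> * cb A)^2)"
  have P0: "P \<ge> 0" by (simp add: P_def)
  have fCA: "fCA a b r = P"
    unfolding fCA_def Let_def Delta P_def s_def[symmetric] x_def[symmetric]
    by (simp add: ab \<beta>_def power_mult_distrib power_divide)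
  have fRD: "fRD a b r = \<beta> * r"
    unfolding fRD_def Let_def Delta s_def[symmetric] x_def[symmetric] by (simp add: \<beta>_def)
  have op: "opnorm2 (plog A) = P + \<beta> * r"
  proof -
    have "sqrt ((\<beta> * cc A)^2 + (\<beta> * cd A)^2) = \<beta> * r"
      using b0 by (simp add: rr power_mult_distrib real_sqrt_mult flip: distrib_left)
    then show ?thesis unfolding L opnorm_formula coef_L P_def by simp
  qed
  have dL: "det (plog A) = P^2 - (\<beta> * r)^2"
    unfolding L det_coef coef_L P_def using b0
    by (simp add: rr power_mult_distrib algebra_simps)
  have co: "conorm2 (plog A) = P - \<beta> * r"
  proof (cases "P + \<beta> * r = 0")
    case True
    then have h1: "P = 0" and h2: "\<beta> * r = 0" using P0 b0 r0 by (smt (verit) mult_nonneg_nonneg)+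
    show ?thesis unfolding conorm2_def dL op h1 h2 by simp
  next
    case False
    then have pos: "P + \<beta> * r > 0" using P0 b0 r0 by (smt (verit) mult_nonneg_nonneg)
    then have "plog A \<noteq> 0" using op by (auto simp: opnorm2_def onorm_zero)
    then have "conorm2 (plog A) = (P^2 - (\<beta> * r)^2) / (P + \<beta> * r)"
      by (simp add: conorm2_def dL op)
    also have "\<dots> = P - \<beta> * r" using pos by (simp add: power2_eq_square field_simps)
    finally show ?thesis .
  qed
  have last: "fCA a b r = AC a * b \<and> fRD a b r = AC a * r" if d1: "det A = 1"
  proof -
    have s1: "s = 1" using d1 by (simp add: s_def)
    have a1: "a > -1" using x1 by (simp add: x_def s1)
    have acp: "AC a > 0" using AC_facts[OF a1] by simp
    have bb: "b \<ge> 0" by (simp add: ab)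
    have "fCA a b r = sqrt ((b * AC a)^2)"
      unfolding fCA_def Let_def Delta d1 by simp
    also have "\<dots> = AC a * b" using acp bb by simp
    finally show ?thesis unfolding fRD_def Let_def Delta d1 by simp
  qed
  have "opnorm2 (plog A) = fCA a b r + fRD a b r" unfolding op fCA fRD ..
  moreover have "conorm2 (plog A) = fCA a b r - fRD a b r" unfolding co fCA fRD ..
  ultimately show ?thesis using last by blast
qed

end
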